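(* For every integer $n\ge 2$, the chromatic number of $H_2(n,n-1)$ equals $4$.
   Context: For $x,y\in\mathbb{Z}_2^n$, $\mathrm{d}(x,y)=|\{i: x_i\neq y_i\}|$ is the Hamming distance. $H_2(n,n-1)$ is the simple undirected graph with vertex set $\mathbb{Z}_2^n$ in which $x,y$ are adjacent iff $\mathrm{d}(x,y)\ge n-1$. *)

theory Defs
  imports Main
begin

text \<open>Vertices of Z_2^n: boolean lists of length n.\<close>
definition cube :: "nat \<Rightarrow> bool list set" where
  "cube n = {x. length x = n}"

definition hamming :: "bool list \<Rightarrow> bool list \<Rightarrow> nat" where
  "hamming x y = card {i. i < length x \<and> x ! i \<noteq> y ! i}"

text \<open>Adjacency of H_2(n,n-1) (simple graph: no loops).\<close>
definition H2_adj :: "nat \<Rightarrow> bool list \<Rightarrow> bool list \<Rightarrow> bool" where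
  "H2_adj n x y \<longleftrightarrow> x \<noteq> y \<and> hamming x y \<ge> n - 1"

definition proper_colouring :: "'a set \<Rightarrow> ('a \<Rightarrow> 'a \<Rightarrow> bool) \<Rightarrow> nat \<Rightarrow> ('a \<Rightarrow> nat) \<Rightarrow> bool" where
  "proper_colouring V E k c \<longleftrightarrow>
     (\<forall>v\<in>V. c v < k) \<and> (\<forall>u\<in>V. \<forall>v\<in>V. E u v \<longrightarrow> c u \<noteq> c v)"

definition chromatic_number :: "'a set \<Rightarrow> ('a \<Rightarrow> 'a \<Rightarrow> bool) \<Rightarrow> nat" where
  "chromatic_number V E = (LEAST k. \<exists>c. proper_colouring V E k c)"

end

theory Submission imports Defs begin

definition w :: "nat \<Rightarrow> nat \<Rightarrow> int" where
  "w a b = (if b = (a+1) mod 3 then 1 else -1)"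

lemma lt3: "(a::nat) < 3 \<longleftrightarrow> a = 0 \<or> a = 1 \<or> a = 2" by auto

lemma w_anti: "a<3 \<Longrightarrow> b<3 \<Longrightarrow> a\<noteq>b \<Longrightarrow> w a b = - w b a"
  unfolding lt3 by (elim disjE) (simp_all add: w_def)

lemma w_mod: "a<3 \<Longrightarrow> b<3 \<Longrightarrow> a\<noteq>b \<Longrightarrow> 3 dvd (w a b - (int b - int a))"
  unfolding lt3 by (elim disjE) (simp_all add: w_def)

lemma w_pm: "w a b = 1 \<or> w a b = -1" unfolding w_def by auto

lemma w_sq: "a<3 \<Longrightarrow> b<3 \<Longrightarrow> c<3 \<Longrightarrow> d<3 \<Longrightarrow> a\<noteq>b \<Longrightarrow> b\<noteq>c \<Longrightarrow> c\<noteq>d \<Longrightarrow> d\<noteq>a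
  \<Longrightarrow> w a b + w b c + w c d + w d a = 0"
  unfolding lt3 by (elim disjE) (simp_all add: w_def)

fun H :: "(bool list \<Rightarrow> nat) \<Rightarrow> bool list \<Rightarrow> int" where
  "H c [] = 0"
| "H c (b#xs) = H (\<lambda>ys. c (False#ys)) xs + (if b then w (c (False#xs)) (c (True#xs)) else 0)"

definition PQ :: "nat \<Rightarrow> (bool list \<Rightarrow> nat) \<Rightarrow> bool" where
  "PQ d c \<longleftrightarrow> (\<forall>x. length x = d \<longrightarrow> c x < 3) \<and>
     (\<forall>x i. length x = d \<longrightarrow> i < d \<longrightarrow> c x \<noteq> c (x[i := \<not> x!i]))"

lemma PQ_D1: "PQ d c \<Longrightarrow> length x = d \<Longrightarrow> c x < 3" unfolding PQ_def by auto
lemma PQ_D2: "PQ d c \<Longrightarrow> length x = d \<Longrightarrow> i < d \<Longrightarrow> c x \<noteq> c (x[i := \<not> x!i])" unfolding PQ_def by auto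

lemma PQ_tail: assumes "PQ (Suc d) c" shows "PQ d (\<lambda>ys. c (False#ys))"
  unfolding PQ_def
proof (intro conjI allI impI)
  fix x :: "bool list" assume "length x = d"
  then show "c (False # x) < 3" using PQ_D1[OF assms, of "False#x"] by simp
next
  fix x :: "bool list" and i assume "length x = d" "i < d"
  then have "c (False#x) \<noteq> c ((False#x)[Suc i := \<not> (False#x)!Suc i])"
    using PQ_D2[OF assms, of "False#x" "Suc i"] by simp
  then show "c (False # x) \<noteq> c (False # x[i := \<not> x ! i])" by simp
qed

lemma H_edge: "PQ (length x) c \<Longrightarrow> i < length x \<Longrightarrow>
   H c (x[i := \<not> x!i]) - H c x = w (c x) (c (x[i := \<not> x!i]))"
proof (induction x arbitrary: c i)
  case Nil then show ?case by simp
next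
  case (Cons b xs)
  have d0: "c (False#xs) \<noteq> c (True#xs)"
    using PQ_D2[OF Cons.prems(1), of "False#xs" 0] by simp
  have l0: "c (False#xs) < 3" "c (True#xs) < 3"
    using PQ_D1[OF Cons.prems(1)] by auto
  show ?case
  proof (cases i)
    case 0
    then show ?thesis using w_anti[OF l0 d0] by (cases b) auto
  next
    case (Suc j)
    let ?ys = "xs[j := \<not> xs!j]"
    have j: "j < length xs" using Cons.prems Suc by simp
    have IH: "H (\<lambda>ys. c (False#ys)) ?ys - H (\<lambda>ys. c (False#ys)) xs = w (c (False#xs)) (c (False#?ys))"
      using Cons.IH[OF PQ_tail[of "length xs" c] j] Cons.prems(1) by simp
    have e: "(b#xs)[i := \<not> (b#xs)!i] = b # ?ys" using Suc by simp
    show ?thesis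
    proof (cases b)
      case False then show ?thesis using IH e by simp
    next
      case True
      have ly: "length ?ys = length xs" by simp
      have "c (False#xs) \<noteq> c (False#?ys)"
        using PQ_D2[OF Cons.prems(1), of "False#xs" "Suc j"] j by simp
      moreover have "c (False#?ys) \<noteq> c (True#?ys)"
        using PQ_D2[OF Cons.prems(1), of "False#?ys" 0] by simp
      moreover have "c (True#?ys) \<noteq> c (True#xs)"
        using PQ_D2[OF Cons.prems(1), of "True#xs" "Suc j"] j by simp
      moreover have "c (False#?ys) < 3" "c (True#?ys) < 3"
        using PQ_D1[OF Cons.prems(1)] by auto
      ultimately have sq: "w (c (False#xs)) (c (False#?ys)) + w (c (False#?ys)) (c (True#?ys))
          + w (c (True#?ys)) (c (True#xs)) + w (c (True#xs)) (c (False#xs)) = 0"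
        by (intro w_sq) (use l0 d0 in auto)
      have "w (c (True#xs)) (c (False#xs)) = - w (c (False#xs)) (c (True#xs))"
        using w_anti[OF l0(2) l0(1)] d0 by auto
      moreover have "w (c (True#?ys)) (c (True#xs)) = - w (c (True#xs)) (c (True#?ys))"
        using w_anti[OF \<open>c (True#?ys) < 3\<close> l0(2) \<open>c (True#?ys) \<noteq> c (True#xs)\<close>] by auto
      ultimately show ?thesis using IH e True sq by simp
    qed
  qed
qed

lemma H_mod3: "PQ (length x) c \<Longrightarrow> 3 dvd (H c x - (int (c x) - int (c (replicate (length x) False))))"
proof (induction x arbitrary: c)
  case Nil then show ?case by simp
next
  case (Cons b xs)
  have IH: "3 dvd (H (\<lambda>ys. c (False#ys)) xs - (int (c (False#xs)) - int (c (False#replicate (length xs) False))))"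
    using Cons.IH[OF PQ_tail] Cons.prems by simp
  have d0: "c (False#xs) \<noteq> c (True#xs)"
    using PQ_D2[OF Cons.prems(1), of "False#xs" 0] by simp
  have l0: "c (False#xs) < 3" "c (True#xs) < 3"
    using PQ_D1[OF Cons.prems(1)] by auto
  have wm: "3 dvd (w (c (False#xs)) (c (True#xs)) - (int (c (True#xs)) - int (c (False#xs))))"
    using w_mod[OF l0 d0] .
  show ?case
  proof (cases b)
    case True
    have "H c (b#xs) - (int (c (b#xs)) - int (c (replicate (length (b#xs)) False))) =
      (H (\<lambda>ys. c (False#ys)) xs - (int (c (False#xs)) - int (c (False#replicate (length xs) False))))
      + (w (c (False#xs)) (c (True#xs)) - (int (c (True#xs)) - int (c (False#xs))))"
      using True by simp
    then show ?thesis using IH wm by (metis dvd_add)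
  next
    case False then show ?thesis using IH by simp
  qed
qed

definition wt :: "bool list \<Rightarrow> nat" where "wt x = length (filter id x)"

lemma H_par: "2 dvd (H c x - int (wt x))"
proof (induction x arbitrary: c)
  case Nil then show ?case by (simp add: wt_def)
next
  case (Cons b xs)
  have IH: "2 dvd (H (\<lambda>ys. c (False#ys)) xs - int (wt xs))" using Cons.IH by simp
  show ?case
  proof (cases b)
    case True
    have "H c (b#xs) - int (wt (b#xs)) = (H (\<lambda>ys. c (False#ys)) xs - int (wt xs))
       + (w (c (False#xs)) (c (True#xs)) - 1)" using True by (simp add: wt_def)
    moreover have "2 dvd (w (c (False#xs)) (c (True#xs)) - 1)" using w_pm[of "c (False#xs)" "c (True#xs)"] by auto
    ultimately show ?thesis using IH by (metis dvd_add)
  next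
    case False then show ?thesis using IH by (simp add: wt_def)
  qed
qed


definition T :: "(bool list \<Rightarrow> nat) \<Rightarrow> bool list \<Rightarrow> int" where
  "T c x = H c (map Not x) - H c x"

lemma T_neg: "T c (map Not x) = - T c x"
  by (simp add: T_def comp_def)

lemma wt_not: "wt (map Not x) + wt x = length x"
  unfolding wt_def by (induction x) auto

lemma T_even: assumes "even (length x)" shows "2 dvd T c x"
proof -
  have a: "2 dvd (H c (map Not x) - int (wt (map Not x)))" by (rule H_par)
  have b: "2 dvd (H c x - int (wt x))" by (rule H_par)
  have e: "int (wt (map Not x)) - int (wt x) = int (length x) - 2 * int (wt x)"
    using wt_not[of x] by linarith
  have c: "2 dvd (int (wt (map Not x)) - int (wt x))" unfolding e using assms by simp
  have "T c x = (H c (map Not x) - int (wt (map Not x))) - (H c x - int (wt x)) + (int (wt (map Not x)) - int (wt x))"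
    unfolding T_def by simp
  then show ?thesis using dvd_add[OF dvd_diff[OF a b] c] by simp
qed

lemma nd3: "a<3 \<Longrightarrow> b<3 \<Longrightarrow> a\<noteq>b \<Longrightarrow> \<not> 3 dvd (int a - int b)"
  unfolding lt3 by (elim disjE) simp_all

lemma T_not3: assumes "PQ (length x) c" "c x \<noteq> c (map Not x)" shows "\<not> 3 dvd T c x"
proof
  assume t: "3 dvd T c x"
  have a: "3 dvd (H c (map Not x) - (int (c (map Not x)) - int (c (replicate (length x) False))))"
    using H_mod3[of "map Not x" c] assms by simp
  have b: "3 dvd (H c x - (int (c x) - int (c (replicate (length x) False))))"
    using H_mod3[of x c] assms by simp
  have "T c x - (int (c (map Not x)) - int (c x)) = (H c (map Not x) - (int (c (map Not x)) - int (c (replicate (length x) False))))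
     - (H c x - (int (c x) - int (c (replicate (length x) False))))" unfolding T_def by simp
  then have "3 dvd (T c x - (int (c (map Not x)) - int (c x)))" using dvd_diff[OF a b] by argo
  then have "3 dvd (T c x - (T c x - (int (c (map Not x)) - int (c x))))" using dvd_diff[OF t] by blast
  then have "3 dvd (int (c (map Not x)) - int (c x))" by simp
  moreover have "c x < 3" "c (map Not x) < 3" using PQ_D1[OF assms(1)] by auto
  ultimately show False using assms(2) nd3 by metis
qed

lemma map_not_flip: "i < length x \<Longrightarrow> map Not (x[i := \<not> x!i]) = (map Not x)[i := \<not> (map Not x)!i]"
  by (simp add: map_update)

lemma T_step: assumes "PQ (length x) c" "i < length x"
  shows "\<bar>T c (x[i := \<not> x!i]) - T c x\<bar> \<le> 2"
proof -
  have e1: "H c (x[i := \<not> x!i]) - H c x = w (c x) (c (x[i := \<not> x!i]))"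
    using H_edge assms by blast
  have e2: "H c ((map Not x)[i := \<not> (map Not x)!i]) - H c (map Not x) = w (c (map Not x)) (c ((map Not x)[i := \<not> (map Not x)!i]))"
    using H_edge[of "map Not x" c i] assms by simp
  have "T c (x[i := \<not> x!i]) - T c x = w (c (map Not x)) (c ((map Not x)[i := \<not> (map Not x)!i])) - w (c x) (c (x[i := \<not> x!i]))"
    unfolding T_def map_not_flip[OF assms(2)] using e1 e2 by simp
  then show ?thesis using w_pm[of "c (map Not x)" "c ((map Not x)[i := \<not> (map Not x)!i])"] w_pm[of "c x" "c (x[i := \<not> x!i])"]
    by auto
qed

lemma take_drop_step: "k < length x \<Longrightarrow> length y = length x \<Longrightarrow>
   take (Suc k) y @ drop (Suc k) x = (take k y @ drop k x)[k := y!k]"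
  by (rule nth_equalityI) (auto simp: nth_append nth_list_update min_def)

lemma connect:
  assumes step: "\<And>u i. length u = d \<Longrightarrow> i < d \<Longrightarrow> P u \<Longrightarrow> P (u[i := \<not> u!i])"
    and lx: "length x = d" and ly: "length y = d" and px: "P x"
  shows "P y"
proof -
  have "k \<le> d \<Longrightarrow> P (take k y @ drop k x)" for k
  proof (induction k)
    case 0 then show ?case using px by simp
  next
    case (Suc k)
    let ?u = "take k y @ drop k x"
    have pu: "P ?u" using Suc by simp
    have lu: "length ?u = d" using lx ly Suc.prems by simp
    have uk: "?u ! k = x ! k" using lx ly Suc.prems by (simp add: nth_append)
    have eq: "take (Suc k) y @ drop (Suc k) x = ?u[k := y!k]"
      using take_drop_step[of k x y] lx ly Suc.prems by simp
    show ?case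
    proof (cases "y!k = ?u!k")
      case True then show ?thesis using eq pu by simp
    next
      case False
      then have "y!k = (\<not> ?u!k)" by blast
      then show ?thesis using eq step[OF lu _ pu, of k] Suc.prems by simp
    qed
  qed
  from this[of d] show ?thesis using ly lx by simp
qed

lemma core:
  assumes "even d" "PQ d c" "\<forall>x. length x = d \<longrightarrow> c x \<noteq> c (map Not x)"
  shows False
proof -
  have ev: "length x = d \<Longrightarrow> 2 dvd T c x" for x using T_even assms(1) by auto
  have n3: "length x = d \<Longrightarrow> \<not> 3 dvd T c x" for x using T_not3 assms(2,3) by auto
  have st: "length x = d \<Longrightarrow> i < d \<Longrightarrow> \<bar>T c (x[i := \<not> x!i]) - T c x\<bar> \<le> 2" for x i
    using T_step assms(2) by auto
  have pos: "T c (u[i := \<not> u!i]) > 0" if "length u = d" "i < d" "T c u > 0" for u i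
  proof -
    have "T c u \<ge> 2" using ev[OF that(1)] that(3) by auto
    moreover have "T c (u[i := \<not> u!i]) \<noteq> 0" using n3[of "u[i := \<not> u!i]"] that by auto
    ultimately show ?thesis using st[OF that(1,2)] by auto
  qed
  have neg: "T c (u[i := \<not> u!i]) < 0" if "length u = d" "i < d" "T c u < 0" for u i
  proof -
    have "T c u \<le> -2" using ev[OF that(1)] that(3) by auto
    moreover have "T c (u[i := \<not> u!i]) \<noteq> 0" using n3[of "u[i := \<not> u!i]"] that by auto
    ultimately show ?thesis using st[OF that(1,2)] by auto
  qed
  let ?z = "replicate d False"
  have lz: "length ?z = d" "length (map Not ?z) = d" by auto
  have "T c ?z \<noteq> 0" using n3[OF lz(1)] by auto
  then show False
  proof (cases "T c ?z > 0")
    case True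
    have "T c (map Not ?z) > 0" by (rule connect[where P="\<lambda>u. T c u > 0", OF pos lz True]) auto
    then show False using T_neg[of c ?z] True by simp
  next
    case False
    then have f: "T c ?z < 0" using \<open>T c ?z \<noteq> 0\<close> by simp
    have "T c (map Not ?z) < 0" by (rule connect[where P="\<lambda>u. T c u < 0", OF neg lz f]) auto
    then show False using T_neg[of c ?z] f by simp
  qed
qed


fun hd' :: "bool list \<Rightarrow> bool list \<Rightarrow> nat" where
  "hd' (a#x) (b#y) = (if a = b then 0 else 1) + hd' x y"
| "hd' _ _ = 0"

lemma hamming_Nil: "hamming [] y = 0" by (simp add: hamming_def)

lemma card_Suc_split: "card {i. i < Suc m \<and> P i} = (if P 0 then 1 else 0) + card {i. i < m \<and> P (Suc i)}"
proof -
  have eq: "{i. i < Suc m \<and> P i} = {i. i = 0 \<and> P 0} \<union> Suc ` {i. i < m \<and> P (Suc i)}"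
  proof
    show "{i. i < Suc m \<and> P i} \<subseteq> {i. i = 0 \<and> P 0} \<union> Suc ` {i. i < m \<and> P (Suc i)}"
    proof
      fix i assume "i \<in> {i. i < Suc m \<and> P i}"
      then have a: "i < Suc m" "P i" by auto
      show "i \<in> {i. i = 0 \<and> P 0} \<union> Suc ` {i. i < m \<and> P (Suc i)}"
      proof (cases i)
        case 0 then show ?thesis using a by simp
      next
        case (Suc j) then have "j \<in> {i. i < m \<and> P (Suc i)}" using a by simp
        then show ?thesis using Suc by blast
      qed
    qed
  qed auto
  have "card ({i. i = 0 \<and> P 0} \<union> Suc ` {i. i < m \<and> P (Suc i)}) = card {i::nat. i = 0 \<and> P 0} + card (Suc ` {i. i < m \<and> P (Suc i)})"
    by (rule card_Un_disjoint) auto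
  also have "card (Suc ` {i. i < m \<and> P (Suc i)}) = card {i. i < m \<and> P (Suc i)}" by (simp add: card_image)
  also have "card {i::nat. i = 0 \<and> P 0} = (if P 0 then 1 else 0)" by simp
  finally show ?thesis using eq by simp
qed

lemma hamming_Cons: "hamming (a#x) (b#y) = (if a = b then 0 else 1) + hamming x y"
  unfolding hamming_def using card_Suc_split[of "length x" "\<lambda>i. (a#x)!i \<noteq> (b#y)!i"] by simp

lemma hamming_hd: "length x = length y \<Longrightarrow> hamming x y = hd' x y"
  by (induction x y rule: list_induct2) (auto simp: hamming_Nil hamming_Cons)

lemma hd_le: "hd' x y \<le> length x"
  by (induction x y rule: hd'.induct) auto

lemma hd_not1: "length x = length y \<Longrightarrow> hd' (map Not x) y = length x - hd' x y"
proof (induction x y rule: list_induct2)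
  case (Cons a x b y) then show ?case using hd_le[of x y] by auto
qed simp

lemma hd_not2: "length x = length y \<Longrightarrow> hd' x (map Not y) = length x - hd' x y"
proof (induction x y rule: list_induct2)
  case (Cons a x b y) then show ?case using hd_le[of x y] by auto
qed simp

lemma hd_notnot: "length x = length y \<Longrightarrow> hd' (map Not x) (map Not y) = hd' x y"
  by (induction x y rule: list_induct2) auto

lemma hd_self: "hd' x x = 0" by (induction x) auto

lemma hd_app: "length x = length y \<Longrightarrow> hd' (x@z) (y@z) = hd' x y"
  by (induction x y rule: list_induct2) (auto simp: hd_self)

lemma hd_flip: "i < length x \<Longrightarrow> hd' x (x[i := \<not> x!i]) = 1"
proof (induction x arbitrary: i)
  case (Cons a x) then show ?case by (cases i) (auto simp: hd_self)
qed simp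

lemma hd_selfnot: "hd' x (map Not x) = length x" by (induction x) auto

lemma wt_flip: "i < length x \<Longrightarrow> odd (wt (x[i := \<not> x!i])) \<longleftrightarrow> \<not> odd (wt x)"
proof (induction x arbitrary: i)
  case (Cons a x) then show ?case by (cases i) (auto simp: wt_def)
qed simp

definition f :: "nat \<Rightarrow> nat \<Rightarrow> bool list \<Rightarrow> bool list" where
  "f n d x = (if odd (wt x) then map Not (x @ replicate (n-d) False) else x @ replicate (n-d) False)"

lemma f_len: "length x = d \<Longrightarrow> d \<le> n \<Longrightarrow> length (f n d x) = n"
  by (simp add: f_def)

lemma f_edge: assumes "length x = d" "d \<le> n" "i < d"
  shows "hd' (f n d x) (f n d (x[i := \<not> x!i])) = n - 1"
proof -
  let ?r = "replicate (n-d) False"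
  let ?x' = "x[i := \<not> x!i]"
  have h: "hd' (x @ ?r) (?x' @ ?r) = 1" using hd_app[of x ?x' ?r] hd_flip[of i x] assms by simp
  have l: "length (x @ ?r) = n" "length (?x' @ ?r) = n" using assms by auto
  have p: "odd (wt ?x') \<longleftrightarrow> \<not> odd (wt x)" using wt_flip assms by auto
  show ?thesis
  proof (cases "odd (wt x)")
    case True
    then show ?thesis using p hd_not1[of "x @ ?r" "?x' @ ?r"] h l by (simp add: f_def)
  next
    case False
    then show ?thesis using p hd_not2[of "x @ ?r" "?x' @ ?r"] h l by (simp add: f_def)
  qed
qed

lemma f_anti: assumes "length x = d" "d \<le> n" "even d"
  shows "hd' (f n d x) (f n d (map Not x)) = d"
proof -
  let ?r = "replicate (n-d) False"
  have h: "hd' (x @ ?r) (map Not x @ ?r) = d" using hd_app[of x "map Not x" ?r] hd_selfnot[of x] assms by simp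
  have l: "length (x @ ?r) = n" "length (map Not x @ ?r) = n" using assms by auto
  have p: "odd (wt (map Not x)) \<longleftrightarrow> odd (wt x)" using wt_not[of x] assms
    by (metis even_add)
  show ?thesis
  proof (cases "odd (wt x)")
    case True
    then show ?thesis using p hd_notnot[of "x @ ?r" "map Not x @ ?r"] h l by (simp add: f_def)
  next
    case False
    then show ?thesis using p h l by (simp add: f_def)
  qed
qed

lemma adj_of_hd: "length u = n \<Longrightarrow> length v = n \<Longrightarrow> hd' u v \<ge> n - 1 \<Longrightarrow> hd' u v \<ge> 1 \<Longrightarrow> H2_adj n u v"
  unfolding H2_adj_def using hamming_hd[of u v] hd_self[of u] by auto

lemma lower:
  assumes n: "n \<ge> 2" and pc: "proper_colouring (cube n) (H2_adj n) k c" and k: "k \<le> 3"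
  shows False
proof -
  define d where "d = 2 * (n div 2)"
  have d: "even d" "d \<le> n" "n - 1 \<le> d" "d \<ge> 2" using n unfolding d_def by auto
  define c' where "c' x = c (f n d x)" for x
  have col: "length x = d \<Longrightarrow> c' x < 3" for x
  proof -
    assume "length x = d"
    then have "f n d x \<in> cube n" using f_len[of x d n] d by (simp add: cube_def)
    then have "c (f n d x) < k" using pc unfolding proper_colouring_def by blast
    then show ?thesis using k unfolding c'_def by simp
  qed
  have e: "length x = d \<Longrightarrow> i < d \<Longrightarrow> c' x \<noteq> c' (x[i := \<not> x!i])" for x i
  proof -
    assume a: "length x = d" "i < d"
    have h: "hd' (f n d x) (f n d (x[i := \<not> x!i])) = n - 1" by (rule f_edge[OF a(1) d(2) a(2)])
    have "H2_adj n (f n d x) (f n d (x[i := \<not> x!i]))"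
      by (rule adj_of_hd) (use h n f_len[OF a(1) d(2)] f_len[of "x[i := \<not> x!i]" d n] a d(2) in auto)
    moreover have "f n d x \<in> cube n" "f n d (x[i := \<not> x!i]) \<in> cube n"
      using f_len a d by (auto simp: cube_def)
    ultimately show ?thesis using pc unfolding proper_colouring_def c'_def by blast
  qed
  have an: "\<forall>x. length x = d \<longrightarrow> c' x \<noteq> c' (map Not x)"
  proof (intro allI impI)
    fix x :: "bool list" assume a: "length x = d"
    have h: "hd' (f n d x) (f n d (map Not x)) = d" by (rule f_anti[OF a d(2) d(1)])
    have "H2_adj n (f n d x) (f n d (map Not x))"
      by (rule adj_of_hd) (use h n d f_len[OF a d(2)] f_len[of "map Not x" d n] a in auto)
    moreover have "f n d x \<in> cube n" "f n d (map Not x) \<in> cube n"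
      using f_len a d by (auto simp: cube_def)
    ultimately show "c' x \<noteq> c' (map Not x)" using pc unfolding proper_colouring_def c'_def by blast
  qed
  have "PQ d c'" unfolding PQ_def using col e by blast
  then show False using core[OF d(1) _ an] by blast
qed

definition c4 :: "bool list \<Rightarrow> nat" where
  "c4 x = 2 * (if x!0 then 1 else 0) + (if x!1 then 1 else 0)"

lemma upper: assumes n: "n \<ge> 2" shows "proper_colouring (cube n) (H2_adj n) 4 c4"
  unfolding proper_colouring_def
proof (intro conjI ballI impI)
  fix v show "c4 v < 4" by (simp add: c4_def)
next
  fix u v assume u: "u \<in> cube n" and v: "v \<in> cube n" and adj: "H2_adj n u v"
  show "c4 u \<noteq> c4 v"
  proof
    assume "c4 u = c4 v"
    then have e0: "u!0 = v!0" and e1: "u!1 = v!1" unfolding c4_def by (cases "u!0"; cases "u!1"; cases "v!0"; cases "v!1"; simp)+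
    have "{i. i < length u \<and> u!i \<noteq> v!i} \<subseteq> {2..<n}"
    proof
      fix i assume "i \<in> {i. i < length u \<and> u!i \<noteq> v!i}"
      then have il: "i < length u" and ne: "u!i \<noteq> v!i" by simp_all
      have "i \<noteq> 0" proof assume "i = 0" then show False using ne e0 by simp qed
      moreover have "i \<noteq> 1" proof assume "i = 1" then show False using ne e1 by simp qed
      moreover have "i < n" using il u by (simp add: cube_def)
      ultimately show "i \<in> {2..<n}" by simp
    qed
    then have "hamming u v \<le> card {2..<n}" unfolding hamming_def by (intro card_mono) auto
    then have "hamming u v \<le> n - 2" by simp
    then show False using adj n unfolding H2_adj_def by linarith
  qed
qed

theorem theorem3p3:
  fixes n :: nat
  assumes "n \<ge> 2"
  shows "chromatic_number (cube n) (H2_adj n) = 4"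
  unfolding chromatic_number_def
proof (rule Least_equality)
  show "\<exists>c. proper_colouring (cube n) (H2_adj n) 4 c" using upper[OF assms] by blast
next
  fix k assume "\<exists>c. proper_colouring (cube n) (H2_adj n) k c"
  then obtain c where "proper_colouring (cube n) (H2_adj n) k c" by blast
  then have pc: "proper_colouring (cube n) (H2_adj n) k c" .
  show "4 \<le> k"
  proof (rule ccontr)
    assume "\<not> 4 \<le> k"
    then show False using lower[OF assms pc] by simp
  qed
qed

end
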